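(* Let $G$ be a graph, $k\ge1$, and $S,T$ independent sets of $G$ of size $k$. Let $\mathcal{F}$ be a family of independent sets of $G$, each of size at least $k$, with $S,T\in\mathcal{F}$. Let $\mathcal{G}$ be the graph with vertex set $\mathcal{F}$ in which distinct $I,I'\in\mathcal{F}$ are adjacent iff $|I\cap I'|\ge k-1$. If there is a path from $S$ to $T$ in $\mathcal{G}$, then there is a token jumping reconfiguration sequence from $S$ to $T$ in $G$.
   Context: A token jumping reconfiguration sequence from $S$ to $T$ is a finite sequence $S=I_0,\dots,I_m=T$ of independent sets of $G$ of size $k$ with each $I_{j+1}=(I_j\setminus\{u\})\cup\{v\}$ for some $u\in I_j$, $v\in V(G)\setminus I_j$. In the paper, $\mathcal{F}$ is obtained from an independence covering family for $(G,k)$ by deleting the members of size less than $k$ and adding $S$ and $T$. *)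

theory Defs
  imports Main
begin

definition graph :: "'a set \<Rightarrow> ('a \<Rightarrow> 'a \<Rightarrow> bool) \<Rightarrow> bool" where
  "graph V E \<longleftrightarrow> finite V \<and> (\<forall>u v. E u v \<longrightarrow> u \<in> V \<and> v \<in> V)
     \<and> (\<forall>u v. E u v \<longrightarrow> E v u) \<and> (\<forall>v. \<not> E v v)"

definition indep_set :: "'a set \<Rightarrow> ('a \<Rightarrow> 'a \<Rightarrow> bool) \<Rightarrow> 'a set \<Rightarrow> bool" where
  "indep_set V E I \<longleftrightarrow> I \<subseteq> V \<and> (\<forall>u\<in>I. \<forall>v\<in>I. \<not> E u v)"

definition tj_step :: "'a set \<Rightarrow> 'a set \<Rightarrow> 'a set \<Rightarrow> bool" where
  "tj_step V I J \<longleftrightarrow> (\<exists>u\<in>I. \<exists>v\<in>V - I. J = (I - {u}) \<union> {v})"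

definition tj_sequence ::
  "'a set \<Rightarrow> ('a \<Rightarrow> 'a \<Rightarrow> bool) \<Rightarrow> nat \<Rightarrow> 'a set list \<Rightarrow> 'a set \<Rightarrow> 'a set \<Rightarrow> bool" where
  "tj_sequence V E k Is S T \<longleftrightarrow> Is \<noteq> [] \<and> hd Is = S \<and> last Is = T
     \<and> (\<forall>I\<in>set Is. indep_set V E I \<and> card I = k)
     \<and> (\<forall>j. Suc j < length Is \<longrightarrow> tj_step V (Is ! j) (Is ! Suc j))"

definition fam_adj :: "nat \<Rightarrow> 'a set \<Rightarrow> 'a set \<Rightarrow> bool" where
  "fam_adj k I J \<longleftrightarrow> I \<noteq> J \<and> card (I \<inter> J) \<ge> k - 1"

definition fam_path :: "'a set set \<Rightarrow> nat \<Rightarrow> 'a set list \<Rightarrow> 'a set \<Rightarrow> 'a set \<Rightarrow> bool" where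
  "fam_path F k Ps S T \<longleftrightarrow> Ps \<noteq> [] \<and> hd Ps = S \<and> last Ps = T \<and> set Ps \<subseteq> F
     \<and> (\<forall>j. Suc j < length Ps \<longrightarrow> fam_adj k (Ps ! j) (Ps ! Suc j))"

end

theory Submission
  imports Defs
begin

definition stp :: "'a set \<Rightarrow> ('a \<Rightarrow> 'a \<Rightarrow> bool) \<Rightarrow> nat \<Rightarrow> 'a set \<Rightarrow> 'a set \<Rightarrow> bool" where
  "stp V E k B C \<longleftrightarrow> indep_set V E B \<and> card B = k \<and> indep_set V E C \<and> card C = k \<and> tj_step V B C"

lemma reach_seq:
  assumes "(stp V E k)\<^sup>*\<^sup>* A B" "indep_set V E A" "card A = k"
  shows "\<exists>Is. tj_sequence V E k Is A B"
  using assms(1)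
proof (induction rule: rtranclp_induct)
  case base
  then show ?case using assms(2,3) by (rule_tac x="[A]" in exI) (auto simp: tj_sequence_def)
next
  case (step B C)
  then obtain Is where Is: "tj_sequence V E k Is A B" by blast
  have sc: "stp V E k B C" by fact
  show ?case
  proof (rule exI[of _ "Is @ [C]"])
    have ne: "Is \<noteq> []" and lB: "last Is = B" using Is by (auto simp: tj_sequence_def)
    have lst: "Is ! (length Is - 1) = B" using ne lB by (simp add: last_conv_nth)
    have "\<forall>j. Suc j < length (Is @ [C]) \<longrightarrow> tj_step V ((Is @ [C]) ! j) ((Is @ [C]) ! Suc j)"
    proof (intro allI impI)
      fix j assume j: "Suc j < length (Is @ [C])"
      show "tj_step V ((Is @ [C]) ! j) ((Is @ [C]) ! Suc j)"
      proof (cases "Suc j < length Is")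
        case True
        then show ?thesis using Is by (simp add: nth_append tj_sequence_def)
      next
        case False
        then have "j = length Is - 1" using j ne by auto
        then show ?thesis using sc lst ne False j by (auto simp: nth_append stp_def)
      qed
    qed
    then show "tj_sequence V E k (Is @ [C]) A C"
      using Is sc by (auto simp: tj_sequence_def stp_def)
  qed
qed

lemma indep_sub: "indep_set V E I \<Longrightarrow> A \<subseteq> I \<Longrightarrow> indep_set V E A"
  unfolding indep_set_def by blast

lemma within:
  assumes "finite I" "indep_set V E I"
  shows "\<And>A. A \<subseteq> I \<Longrightarrow> B \<subseteq> I \<Longrightarrow> card A = k \<Longrightarrow> card B = k \<Longrightarrow> card (A - B) = n
     \<Longrightarrow> (stp V E k)\<^sup>*\<^sup>* A B"
proof (induction n)
  case 0
  have fA: "finite A" "finite B" using 0 assms(1) finite_subset by auto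
  have "A \<subseteq> B" using 0 fA by auto
  then have "A = B" using 0 fA card_subset_eq by metis
  then show ?case by simp
next
  case (Suc n)
  have fA: "finite A" "finite B" using Suc assms(1) finite_subset by auto
  have "A - B \<noteq> {}" using Suc.prems(5) by (metis card.empty nat.distinct(1))
  then obtain a where a: "a \<in> A" "a \<notin> B" by auto
  have "B - A \<noteq> {}"
  proof
    assume "B - A = {}"
    then have "B \<subseteq> A" by auto
    then have "B = A" using Suc fA card_subset_eq by metis
    then show False using a by auto
  qed
  then obtain b where b: "b \<in> B" "b \<notin> A" by auto
  define A' where "A' = (A - {a}) \<union> {b}"
  have "card A > 0" using a fA card_gt_0_iff by blast
  then have cA': "card A' = k" unfolding A'_def using a b fA Suc.prems
    by (simp add: card_insert_if)
  have sA': "A' \<subseteq> I" using Suc.prems b unfolding A'_def by auto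
  have "A' - B = (A - B) - {a}" unfolding A'_def using b by auto
  then have "card (A' - B) = n" using Suc.prems a fA by simp
  then have r: "(stp V E k)\<^sup>*\<^sup>* A' B" using Suc.IH sA' Suc.prems cA' by blast
  have iA: "indep_set V E A" "indep_set V E A'" using assms(2) Suc.prems sA' indep_sub by blast+
  have "b \<in> V" using b Suc.prems assms(2) by (auto simp: indep_set_def)
  then have "stp V E k A A'" using iA cA' Suc.prems a b unfolding stp_def tj_step_def A'_def by blast
  then show ?case using r by (meson converse_rtranclp_into_rtranclp)
qed

theorem lemma7p1:
  fixes V :: "'a set" and E :: "'a \<Rightarrow> 'a \<Rightarrow> bool" and k :: nat
    and S T :: "'a set" and F :: "'a set set"
  assumes "graph V E" and "k \<ge> 1"
    and "indep_set V E S" and "card S = k"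
    and "indep_set V E T" and "card T = k"
    and "\<forall>I\<in>F. indep_set V E I \<and> card I \<ge> k"
    and "S \<in> F" and "T \<in> F"
    and "\<exists>Ps. fam_path F k Ps S T"
  shows "\<exists>Is. tj_sequence V E k Is S T"
proof -
  obtain Ps where P: "fam_path F k Ps S T" using assms(10) by blast
  have fV: "finite V" using assms(1) by (simp add: graph_def)
  have inF: "\<And>j. j < length Ps \<Longrightarrow> Ps ! j \<in> F" using P by (auto simp: fam_path_def)
  have fin: "\<And>I. I \<in> F \<Longrightarrow> finite I" using assms(7) fV
    by (meson finite_subset indep_set_def)
  have main: "\<And>j. j < length Ps \<Longrightarrow> \<exists>A. A \<subseteq> Ps ! j \<and> card A = k \<and> (stp V E k)\<^sup>*\<^sup>* S A"
  proof -
    fix j show "j < length Ps \<Longrightarrow> \<exists>A. A \<subseteq> Ps ! j \<and> card A = k \<and> (stp V E k)\<^sup>*\<^sup>* S A"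
    proof (induction j)
      case 0
      then have "Ps ! 0 = S" using P by (auto simp: fam_path_def hd_conv_nth)
      then show ?case using assms(4) by auto
    next
      case (Suc j)
      let ?I = "Ps ! j" and ?J = "Ps ! Suc j"
      obtain A where A: "A \<subseteq> ?I" "card A = k" "(stp V E k)\<^sup>*\<^sup>* S A" using Suc by auto
      have IF: "?I \<in> F" "?J \<in> F" using inF Suc.prems by auto
      have adj: "card (?I \<inter> ?J) \<ge> k - 1" using P Suc.prems by (auto simp: fam_path_def fam_adj_def)
      obtain C where C: "C \<subseteq> ?I \<inter> ?J" "card C = k - 1" "finite C" using obtain_subset_with_card_n[OF adj] by blast
      have fI: "finite ?I" "finite ?J" using fin IF by auto
      have fC: "finite C" using C by blast
      have cI: "card ?I \<ge> k" "card ?J \<ge> k" using IF assms(7) by auto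
      have "card C < card ?I" using C cI assms(2) by simp
      then have "?I - C \<noteq> {}" using fC card_mono[OF fC, of ?I] by auto
      then obtain x where x: "x \<in> ?I" "x \<notin> C" by auto
      have "card C < card ?J" using C cI assms(2) by simp
      then have "?J - C \<noteq> {}" using fC card_mono[OF fC, of ?J] by auto
      then obtain y where y: "y \<in> ?J" "y \<notin> C" by auto
      have indI: "indep_set V E ?I" "indep_set V E ?J" using IF assms(7) by auto
      have cx: "card (insert x C) = k" using x fC C assms(2) by simp
      have cy: "card (insert y C) = k" using y fC C assms(2) by simp
      have sx: "insert x C \<subseteq> ?I" using x C by auto
      have sy: "insert y C \<subseteq> ?J" using y C by auto
      have r1: "(stp V E k)\<^sup>*\<^sup>* A (insert x C)"
        using within[OF fI(1) indI(1) A(1) sx A(2) cx refl] .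
      have ix: "indep_set V E (insert x C)" and iy: "indep_set V E (insert y C)"
        using indI sx sy indep_sub by blast+
      have r2: "(stp V E k)\<^sup>*\<^sup>* (insert x C) (insert y C)"
      proof (cases "x = y")
        case True then show ?thesis by simp
      next
        case False
        have "y \<in> V" using y indI by (auto simp: indep_set_def)
        moreover have "insert y C = (insert x C - {x}) \<union> {y}" using x by auto
        ultimately have "tj_step V (insert x C) (insert y C)"
          unfolding tj_step_def using False y by blast
        then show ?thesis using ix iy cx cy by (auto simp: stp_def)
      qed
      have "(stp V E k)\<^sup>*\<^sup>* S (insert y C)" using A(3) r1 r2 by (meson rtranclp_trans)
      then show ?case using sy cy by blast
    qed
  qed
  have ne: "Ps \<noteq> []" using P by (simp add: fam_path_def)
  have "Ps ! (length Ps - 1) = T" using P ne by (simp add: fam_path_def last_conv_nth)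
  then obtain A where A: "A \<subseteq> T" "card A = k" "(stp V E k)\<^sup>*\<^sup>* S A" using main[of "length Ps - 1"] ne by auto
  have "finite T" using assms(5) fV by (meson finite_subset indep_set_def)
  then have "A = T" using A assms(6) card_subset_eq by metis
  then show ?thesis using reach_seq A assms(3,4) by blast
qed

end
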